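(* Let $h\in\bar K[z]$ be nonzero and let $h=q^2+\rho$ be a part-square decomposition with $t_{q,\rho}<2v(2)$. Then: (a) the decomposition is good if and only if some (equivalently, any) normalized reduction of $\rho$ is not the square of a polynomial in $k[z]$; (b) if the decomposition $h=q^2+\rho$ is good and $h=\tilde q^2+\tilde\rho$ is another good part-square decomposition, then for any normalized reductions of $\rho$ and $\tilde\rho$, the sets of odd degrees of monomials appearing in them coincide, and their derivatives are equal up to a nonzero scalar in $k$.
   Context: $K$ is a field of characteristic $0$, complete with respect to a discrete valuation $v$ (values in $\mathbb{Q}\cup\{+\infty\}$), with algebraically closed residue field $k$ of characteristic $2$; $v$ extends to a fixed algebraic closure $\bar K$. For nonzero $h(z)=\sum_i H_iz^i\in\bar K[z]$, $v(h)=\min_i v(H_i)$ (Gauss valuation). A normalized reduction of a nonzero $h$ is the image in $k[z]$ of $\gamma^{-1}h$ for some $\gamma\in\bar K^\times$ with $v(\gamma)=v(h)$ (unique up to a nonzero scalar). A part-square decomposition of $h$ is an expression $h=q^2+\rho$ with $q,\rho\in\bar K[z]$ and $\deg q\le\lceil\deg(h)/2\rceil$; set $t_{q,\rho}=v(\rho)-v(h)$. The decomposition is good if either $t_{q,\rho}\ge 2v(2)$, or $t_{q,\rho}<2v(2)$ and there is no part-square decomposition $h=\tilde q^2+\tilde\rho$ with $t_{\tilde q,\tilde\rho}>t_{q,\rho}$. *)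

theory Defs
  imports "HOL-Computational_Algebra.Polynomial" "HOL-Library.Extended_Real"
begin

text \<open>The type 'a plays the role of the algebraic closure of K, with the
extended valuation v (values in Q united with +infinity, encoded in ereal). The type 'k is the residue field k, and red is the
reduction map from the valuation ring of 'a onto k.\<close>

definition alg_closed_type :: "'b::field itself \<Rightarrow> bool" where
  "alg_closed_type _ \<longleftrightarrow> (\<forall>p::'b poly. degree p \<ge> 1 \<longrightarrow> (\<exists>x. poly p x = 0))"

definition is_valuation :: "('a::field \<Rightarrow> ereal) \<Rightarrow> bool" where
  "is_valuation v \<longleftrightarrow>
     (\<forall>x. v x = \<infinity> \<longleftrightarrow> x = 0) \<and>
     (\<forall>x. x \<noteq> 0 \<longrightarrow> (\<exists>r::rat. v x = ereal (real_of_rat r))) \<and>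
     (\<forall>x y. v (x * y) = v x + v y) \<and>
     (\<forall>x y. v (x + y) \<ge> min (v x) (v y))"

definition is_subfield :: "'a::field set \<Rightarrow> bool" where
  "is_subfield K \<longleftrightarrow> 0 \<in> K \<and> 1 \<in> K \<and>
     (\<forall>x\<in>K. \<forall>y\<in>K. x + y \<in> K \<and> x - y \<in> K \<and> x * y \<in> K) \<and>
     (\<forall>x\<in>K. inverse x \<in> K)"

definition algebraic_over :: "'a::field set \<Rightarrow> 'a \<Rightarrow> bool" where
  "algebraic_over K x \<longleftrightarrow> (\<exists>p. p \<noteq> 0 \<and> (\<forall>i. coeff p i \<in> K) \<and> poly p x = 0)"

definition discrete_on :: "('a::field \<Rightarrow> ereal) \<Rightarrow> 'a set \<Rightarrow> bool" where
  "discrete_on v K \<longleftrightarrow> (\<exists>c::rat. c > 0 \<and>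
      v ` (K - {0}) = {ereal (real_of_rat (of_int n * c)) | n. True})"

definition complete_on :: "('a::field \<Rightarrow> ereal) \<Rightarrow> 'a set \<Rightarrow> bool" where
  "complete_on v K \<longleftrightarrow> (\<forall>x::nat \<Rightarrow> 'a. (\<forall>n. x n \<in> K) \<longrightarrow>
      (\<forall>M::real. \<exists>N. \<forall>m\<ge>N. \<forall>n\<ge>N. v (x m - x n) \<ge> ereal M) \<longrightarrow>
      (\<exists>L\<in>K. \<forall>M::real. \<exists>N. \<forall>n\<ge>N. v (x n - L) \<ge> ereal M))"

definition is_reduction :: "('a::field \<Rightarrow> ereal) \<Rightarrow> ('a \<Rightarrow> 'k::field) \<Rightarrow> bool" where
  "is_reduction v red \<longleftrightarrow>
     (\<forall>x y. v x \<ge> 0 \<longrightarrow> v y \<ge> 0 \<longrightarrow> red (x + y) = red x + red y \<and> red (x * y) = red x * red y) \<and>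
     red 1 = 1 \<and>
     (\<forall>x. v x \<ge> 0 \<longrightarrow> (red x = 0 \<longleftrightarrow> v x > 0)) \<and>
     (\<forall>c. \<exists>x. v x \<ge> 0 \<and> red x = c)"

definition setting :: "'a::field_char_0 set \<Rightarrow> ('a \<Rightarrow> ereal) \<Rightarrow> ('a \<Rightarrow> 'k::field) \<Rightarrow> bool" where
  "setting K v red \<longleftrightarrow>
     alg_closed_type TYPE('a) \<and> alg_closed_type TYPE('k) \<and> (2::'k) = 0 \<and>
     is_subfield K \<and> (\<forall>x. algebraic_over K x) \<and>
     is_valuation v \<and> discrete_on v K \<and> complete_on v K \<and>
     is_reduction v red \<and> (\<forall>c. \<exists>x\<in>K. v x \<ge> 0 \<and> red x = c)"

definition gauss_val :: "('a::field \<Rightarrow> ereal) \<Rightarrow> 'a poly \<Rightarrow> ereal" where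
  "gauss_val v h = Min ((\<lambda>i. v (coeff h i)) ` {..degree h})"

definition normalized_reduction ::
  "('a::field \<Rightarrow> ereal) \<Rightarrow> ('a \<Rightarrow> 'k::field) \<Rightarrow> 'a poly \<Rightarrow> 'k poly \<Rightarrow> bool" where
  "normalized_reduction v red h hb \<longleftrightarrow> h \<noteq> 0 \<and>
     (\<exists>\<gamma>. \<gamma> \<noteq> 0 \<and> v \<gamma> = gauss_val v h \<and> hb = map_poly red (smult (inverse \<gamma>) h))"

definition part_square_decomp :: "'a::field poly \<Rightarrow> 'a poly \<Rightarrow> 'a poly \<Rightarrow> bool" where
  "part_square_decomp h q \<rho> \<longleftrightarrow> h = q ^ 2 + \<rho> \<and> degree q \<le> (degree h + 1) div 2"

definition tval :: "('a::field \<Rightarrow> ereal) \<Rightarrow> 'a poly \<Rightarrow> 'a poly \<Rightarrow> ereal" where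
  "tval v h \<rho> = gauss_val v \<rho> - gauss_val v h"

definition good_decomp :: "('a::field \<Rightarrow> ereal) \<Rightarrow> 'a poly \<Rightarrow> 'a poly \<Rightarrow> 'a poly \<Rightarrow> bool" where
  "good_decomp v h q \<rho> \<longleftrightarrow> part_square_decomp h q \<rho> \<and>
     (tval v h \<rho> \<ge> 2 * v 2 \<or>
      (tval v h \<rho> < 2 * v 2 \<and>
       \<not> (\<exists>q' \<rho>'. part_square_decomp h q' \<rho>' \<and> tval v h \<rho>' > tval v h \<rho>)))"

definition is_square_poly :: "'k::comm_semiring_1 poly \<Rightarrow> bool" where
  "is_square_poly r \<longleftrightarrow> (\<exists>s. r = s ^ 2)"

definition odd_degrees :: "'k::zero poly \<Rightarrow> nat set" where
  "odd_degrees r = {i. odd i \<and> coeff r i \<noteq> 0}"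

end

theory Submission
  imports Defs
begin

locale vr =
  fixes v :: "'a::field_char_0 \<Rightarrow> ereal" and red :: "'a \<Rightarrow> 'k::field"
  assumes val: "is_valuation v" and rd: "is_reduction v red" and two: "(2::'k) = 0"
begin

lemma v_zero[simp]: "v 0 = \<infinity>" using val unfolding is_valuation_def by blast
lemma v_inf_iff: "v x = \<infinity> \<longleftrightarrow> x = 0" using val unfolding is_valuation_def by blast
lemma v_mult: "v (x * y) = v x + v y" using val unfolding is_valuation_def by blast
lemma v_add: "v (x + y) \<ge> min (v x) (v y)" using val unfolding is_valuation_def by blast
lemma v_fin: "x \<noteq> 0 \<Longrightarrow> \<exists>r::real. v x = ereal r"
  using val unfolding is_valuation_def by blast

lemma v_one[simp]: "v 1 = 0"
proof -
  obtain r where r: "v 1 = ereal r" using v_fin[of 1] by auto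
  have "v 1 = v 1 + v 1" using v_mult[of 1 1] by simp
  then show ?thesis using r by simp
qed

lemma v_m1: "v (-1) = 0"
proof -
  obtain r where r: "v (-1) = ereal r" using v_fin[of "-1"] by auto
  have "v 1 = v (-1) + v (-1)" using v_mult[of "-1" "-1"] by simp
  then show ?thesis using r by simp
qed

lemma v_neg[simp]: "v (- x) = v x"
  using v_mult[of "-1" x] v_m1 by simp

lemma v_diff: "v (x - y) \<ge> min (v x) (v y)"
  using v_add[of x "-y"] by simp

lemma v_inv: "x \<noteq> 0 \<Longrightarrow> v (inverse x) = - v x"
proof -
  assume x: "x \<noteq> 0"
  obtain r where r: "v x = ereal r" using v_fin x by blast
  obtain s where s: "v (inverse x) = ereal s" using v_fin[of "inverse x"] x by auto
  have "0 = v x + v (inverse x)" using v_mult[of x "inverse x"] x by simp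
  then show ?thesis using r s by simp
qed

lemma v_strict: assumes "v x < v y" shows "v (x + y) = v x"
proof -
  have 1: "v (x + y) \<ge> v x" using v_add[of x y] assms by simp
  have "v x \<ge> min (v (x + y)) (v y)" using v_diff[of "x + y" y] by simp
  then have "v (x + y) \<le> v x" using assms by (auto simp: min_def split: if_splits)
  then show ?thesis using 1 by simp
qed

lemma red_add: "0 \<le> v x \<Longrightarrow> 0 \<le> v y \<Longrightarrow> red (x + y) = red x + red y"
  using rd unfolding is_reduction_def by blast
lemma red_mult: "0 \<le> v x \<Longrightarrow> 0 \<le> v y \<Longrightarrow> red (x * y) = red x * red y"
  using rd unfolding is_reduction_def by blast
lemma red_one[simp]: "red 1 = 1" using rd unfolding is_reduction_def by blast
lemma red_zero_iff: "0 \<le> v x \<Longrightarrow> red x = 0 \<longleftrightarrow> 0 < v x"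
  using rd unfolding is_reduction_def by blast
lemma red_surj: "\<exists>x. 0 \<le> v x \<and> red x = c" using rd unfolding is_reduction_def by blast
lemma red_0[simp]: "red 0 = 0" using red_zero_iff[of 0] by simp

lemma red_neg: "0 \<le> v x \<Longrightarrow> red (- x) = - red x"
  using red_add[of x "-x"] by (simp add: eq_neg_iff_add_eq_0 add.commute)

lemma red_diff: "0 \<le> v x \<Longrightarrow> 0 \<le> v y \<Longrightarrow> red (x - y) = red x - red y"
  using red_add[of x "-y"] red_neg[of y] by simp

lemma v_add_ge: "c \<le> v x \<Longrightarrow> c \<le> v y \<Longrightarrow> c \<le> v (x + y)"
proof -
  assume "c \<le> v x" "c \<le> v y"
  then have "c \<le> min (v x) (v y)" by simp
  then show ?thesis using v_add[of x y] by (rule order_trans)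
qed

lemma v_add_gt: "c < v x \<Longrightarrow> c < v y \<Longrightarrow> c < v (x + y)"
  using v_add[of x y] by (meson less_le_trans min_less_iff_conj) 

lemma v_two_pos: "0 < v 2"
proof -
  have e: "(2::'a) = 1 + 1" by simp
  have "0 \<le> v ((1::'a) + 1)" using v_add_ge[of 0 1 1] by simp
  then have a: "v 2 \<ge> 0" by (simp only: e)
  have "red ((1::'a) + 1) = 1 + 1" using red_add[of 1 1] by simp
  also have "(1::'k) + 1 = 0" using two by simp
  finally have "red (2::'a) = 0" by (simp only: e)
  then show ?thesis using red_zero_iff a by blast
qed

lemma sum_ge: "finite A \<Longrightarrow> (\<forall>x\<in>A. c \<le> v (f x)) \<Longrightarrow> c \<le> v (sum f A)"
  by (induction A rule: finite_induct) (auto intro: v_add_ge)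

lemma sum_gt: "finite A \<Longrightarrow> (\<forall>x\<in>A. ereal c < v (f x)) \<Longrightarrow> ereal c < v (sum f A)"
  by (induction A rule: finite_induct) (auto intro: v_add_gt)

lemma red_sum: "finite A \<Longrightarrow> (\<forall>x\<in>A. 0 \<le> v (f x)) \<Longrightarrow> red (sum f A) = (\<Sum>x\<in>A. red (f x))"
proof (induction A rule: finite_induct)
  case (insert x F)
  then show ?case by (simp add: red_add sum_ge)
qed simp

lemma ge_mult: "ereal a \<le> v x \<Longrightarrow> ereal b \<le> v y \<Longrightarrow> ereal (a + b) \<le> v (x * y)"
  unfolding v_mult by (metis add_mono plus_ereal.simps(1))

lemma gt_mult: "ereal a < v x \<Longrightarrow> ereal b \<le> v y \<Longrightarrow> ereal (a + b) < v (x * y)"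
  unfolding v_mult by (cases "v x"; cases "v y") auto

end

context vr begin

lemma gv_ge_iff: "c \<le> gauss_val v p \<longleftrightarrow> (\<forall>i. c \<le> v (coeff p i))"
proof -
  have "c \<le> gauss_val v p \<longleftrightarrow> (\<forall>i\<in>{..degree p}. c \<le> v (coeff p i))"
    unfolding gauss_val_def by (subst Min_ge_iff) auto
  also have "\<dots> \<longleftrightarrow> (\<forall>i. c \<le> v (coeff p i))"
    apply (auto simp: not_le)
    subgoal for i
      apply (cases "i \<le> degree p") 
      using coeff_eq_0[of p i] by (auto simp: not_le)
    done
  finally show ?thesis .
qed

lemma gv_gt_iff: "c < gauss_val v p \<longleftrightarrow> (\<forall>i. c < v (coeff p i))"
proof -
  have "c < gauss_val v p \<longleftrightarrow> (\<forall>i\<in>{..degree p}. c < v (coeff p i))"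
    unfolding gauss_val_def by (subst Min_gr_iff) auto
  also have "\<dots> \<longleftrightarrow> (\<forall>i. c < v (coeff p i))"
    apply (auto simp: not_le)
    subgoal for i
      apply (cases "i \<le> degree p") 
      using coeff_eq_0[of p i] by (auto simp: not_le)
    done
  finally show ?thesis .
qed

lemma gv_le: "gauss_val v p \<le> v (coeff p i)"
  using gv_ge_iff[of "gauss_val v p" p] by simp

lemma gv_att: "\<exists>i. gauss_val v p = v (coeff p i)"
proof -
  have "Min ((\<lambda>i. v (coeff p i)) ` {..degree p}) \<in> (\<lambda>i. v (coeff p i)) ` {..degree p}"
    by (rule Min_in) auto
  then obtain i where "Min ((\<lambda>i. v (coeff p i)) ` {..degree p}) = v (coeff p i)" by blast
  then show ?thesis unfolding gauss_val_def by blast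
qed

lemma gv_fin: assumes "p \<noteq> 0" shows "\<exists>m. gauss_val v p = ereal m"
proof -
  obtain i where i: "gauss_val v p = v (coeff p i)" using gv_att by blast
  have "gauss_val v p \<le> v (lead_coeff p)" by (rule gv_le)
  also have "\<dots> < \<infinity>" using assms v_inf_iff[of "lead_coeff p"] by simp
  finally have "coeff p i \<noteq> 0" using i by auto
  then show ?thesis using i v_fin by auto
qed

lemma gv_zero[simp]: "gauss_val v 0 = \<infinity>"
  using gv_att[of 0] by auto

lemma gv_mult_ge: "ereal a \<le> gauss_val v p \<Longrightarrow> ereal b \<le> gauss_val v q \<Longrightarrow> ereal (a + b) \<le> gauss_val v (p * q)"
  unfolding gv_ge_iff coeff_mult by (auto intro!: sum_ge ge_mult)

lemma gv_mult_gt: "ereal a < gauss_val v p \<Longrightarrow> ereal b \<le> gauss_val v q \<Longrightarrow> ereal (a + b) < gauss_val v (p * q)"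
  unfolding gv_ge_iff gv_gt_iff coeff_mult by (auto intro!: sum_gt gt_mult)

lemma gv_add_ge: "c \<le> gauss_val v p \<Longrightarrow> c \<le> gauss_val v q \<Longrightarrow> c \<le> gauss_val v (p + q)"
  unfolding gv_ge_iff by (auto intro!: v_add_ge)

lemma gv_add_gt: "c < gauss_val v p \<Longrightarrow> c < gauss_val v q \<Longrightarrow> c < gauss_val v (p + q)"
  unfolding gv_gt_iff by (auto intro!: v_add_gt)

lemma gv_minus[simp]: "gauss_val v (- p) = gauss_val v p"
  unfolding gauss_val_def by simp

lemma gv_diff_ge: "c \<le> gauss_val v p \<Longrightarrow> c \<le> gauss_val v q \<Longrightarrow> c \<le> gauss_val v (p - q)"
  using gv_add_ge[of c p "-q"] by simp

lemma gv_diff_gt: "c < gauss_val v p \<Longrightarrow> c < gauss_val v q \<Longrightarrow> c < gauss_val v (p - q)"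
  using gv_add_gt[of c p "-q"] by simp

lemma coeff_R: "coeff (map_poly red p) i = red (coeff p i)"
  by (simp add: coeff_map_poly)

lemma R_add: "0 \<le> gauss_val v p \<Longrightarrow> 0 \<le> gauss_val v q \<Longrightarrow> map_poly red (p + q) = map_poly red p + map_poly red q"
  unfolding poly_eq_iff gv_ge_iff by (simp add: coeff_R red_add)

lemma R_diff: "0 \<le> gauss_val v p \<Longrightarrow> 0 \<le> gauss_val v q \<Longrightarrow> map_poly red (p - q) = map_poly red p - map_poly red q"
  unfolding poly_eq_iff gv_ge_iff by (simp add: coeff_R red_diff)

lemma R_mult: assumes "0 \<le> gauss_val v p" "0 \<le> gauss_val v q"
  shows "map_poly red (p * q) = map_poly red p * map_poly red q"
proof -
  have p: "\<And>i. 0 \<le> v (coeff p i)" and q: "\<And>i. 0 \<le> v (coeff q i)" using assms gv_ge_iff by auto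
  have pq: "\<And>i j. 0 \<le> v (coeff p i * coeff q j)" using ge_mult[of 0 _ 0] p q by (metis add_0 zero_ereal_def)
  show ?thesis unfolding poly_eq_iff coeff_R coeff_mult
    by (simp add: red_sum pq red_mult p q coeff_R)
qed

lemma R_smult: assumes "0 \<le> v c" "0 \<le> gauss_val v p"
  shows "map_poly red (smult c p) = smult (red c) (map_poly red p)"
  using assms unfolding poly_eq_iff gv_ge_iff by (simp add: coeff_R red_mult)

lemma R_zero_iff: assumes "0 \<le> gauss_val v p"
  shows "map_poly red p = 0 \<longleftrightarrow> 0 < gauss_val v p"
  using assms unfolding poly_eq_iff gv_ge_iff gv_gt_iff by (simp add: coeff_R red_zero_iff)

lemma v_smult_coeff: "v (coeff (smult c p) i) = v c + v (coeff p i)"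
  by (simp add: v_mult)

lemma gauss_sq: assumes "p \<noteq> 0" "gauss_val v p = ereal m"
  shows "\<exists>i. v (coeff (p * p) i) \<le> ereal (2 * m)"
proof -
  obtain j where j: "gauss_val v p = v (coeff p j)" using gv_att by blast
  define c where "c = coeff p j"
  have vc: "v c = ereal m" using j assms c_def by simp
  have c0: "c \<noteq> 0" using vc v_zero by auto
  define p0 where "p0 = smult (inverse c) p"
  have vic: "v (inverse c) = ereal (- m)" using v_inv[OF c0] vc by simp
  have g0: "0 \<le> gauss_val v p0"
    unfolding gv_ge_iff p0_def v_smult_coeff vic
  proof
    fix i have "ereal m \<le> v (coeff p i)" using assms gv_le by metis
    then show "0 \<le> ereal (- m) + v (coeff p i)" by (cases "v (coeff p i)") auto
  qed
  have "coeff p0 j = 1" using c0 unfolding p0_def c_def by simp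
  then have "coeff (map_poly red p0) j \<noteq> 0" by (simp add: coeff_R)
  then have "map_poly red p0 \<noteq> 0" by auto
  then have "map_poly red (p0 * p0) \<noteq> 0" using R_mult[OF g0 g0] by simp
  moreover have "0 \<le> gauss_val v (p0 * p0)" using gv_mult_ge[of 0 p0 0 p0] g0 by (simp add: zero_ereal_def)
  ultimately have "\<not> 0 < gauss_val v (p0 * p0)" using R_zero_iff by blast
  then obtain i where i: "v (coeff (p0 * p0) i) \<le> 0" unfolding gv_gt_iff by (auto simp: not_less)
  have "smult (c*c) (p0*p0) = smult (c * c) (smult (inverse c * inverse c) (p*p))"
    unfolding p0_def by (simp only: mult_smult_left mult_smult_right smult_smult)
  also have "\<dots> = smult (c * c * (inverse c * inverse c)) (p*p)" by (simp only: smult_smult)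
  also have "c * c * (inverse c * inverse c) = 1" using c0 by (simp add: field_simps)
  finally have "p * p = smult (c * c) (p0 * p0)" by simp
  then have "coeff (p * p) i = (c * c) * coeff (p0 * p0) i" by (simp only: coeff_smult)
  then have "v (coeff (p * p) i) = ereal m + ereal m + v (coeff (p0 * p0) i)"
    by (simp only: v_mult vc)
  also have "\<dots> \<le> ereal m + ereal m + 0" using i by (intro add_left_mono)
  also have "\<dots> = ereal (2 * m)" by simp
  finally show ?thesis by blast
qed

end

locale dec = vr v red for v :: "'a::field_char_0 \<Rightarrow> ereal" and red :: "'a \<Rightarrow> 'k::field" +
  fixes h q \<rho> :: "'a poly"
  assumes psd: "part_square_decomp h q \<rho>" and hnz: "h \<noteq> 0"
    and tv: "tval v h \<rho> < 2 * v 2"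
begin

lemma hqr: "h = q ^ 2 + \<rho>" using psd unfolding part_square_decomp_def by blast

lemma nums: "\<exists>a b w. gauss_val v h = ereal a \<and> gauss_val v \<rho> = ereal b \<and> v 2 = ereal w \<and> b - a < 2 * w \<and> 0 < w"
proof -
  obtain a where a: "gauss_val v h = ereal a" using gv_fin hnz by blast
  obtain w where w: "v 2 = ereal w" using v_fin[of 2] by auto
  have w0: "0 < w" using v_two_pos w by simp
  have "\<rho> \<noteq> 0"
  proof
    assume "\<rho> = 0"
    then have "tval v h \<rho> = \<infinity>" unfolding tval_def using a by simp
    then show False using tv w by simp
  qed
  then obtain b where b: "gauss_val v \<rho> = ereal b" using gv_fin by blast
  have "b - a < 2 * w" using tv unfolding tval_def a b w by simp
  then show ?thesis using a b w w0 by blast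
qed

lemma rnz: "\<rho> \<noteq> 0" using nums by auto

end

locale dec2 = dec v red h q \<rho> for v :: "'a::field_char_0 \<Rightarrow> ereal" and red :: "'a \<Rightarrow> 'k::field"
  and h q \<rho> +
  fixes \<gamma> \<beta> :: 'a
  assumes vg: "v \<gamma> = gauss_val v \<rho>" and bb: "\<beta> * \<beta> = \<gamma>"
begin

lemma g0: "\<gamma> \<noteq> 0" using vg nums v_zero by auto
lemma b0: "\<beta> \<noteq> 0" using g0 bb by auto

lemma q_eq: "q = smult \<beta> (smult (inverse \<beta>) q)" using b0 by simp
lemma r_eq: "\<rho> = smult \<gamma> (smult (inverse \<gamma>) \<rho>)" using g0 by simp

lemma scale_ge: assumes "gauss_val v \<rho> \<le> gauss_val v p" shows "0 \<le> gauss_val v (smult (inverse \<gamma>) p)"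
proof -
  obtain b where b: "v \<gamma> = ereal b" using vg nums by auto
  have vi: "v (inverse \<gamma>) = ereal (- b)" using v_inv[OF g0] b by simp
  show ?thesis unfolding gv_ge_iff v_smult_coeff vi
  proof
    fix i have "ereal b \<le> v (coeff p i)" using assms gv_le vg b by (metis order_trans)
    then show "0 \<le> ereal (- b) + v (coeff p i)" by (cases "v (coeff p i)") auto
  qed
qed

lemma scale_gt: assumes "gauss_val v \<rho> < gauss_val v p" shows "0 < gauss_val v (smult (inverse \<gamma>) p)"
proof -
  obtain b where b: "v \<gamma> = ereal b" using vg nums by auto
  have vi: "v (inverse \<gamma>) = ereal (- b)" using v_inv[OF g0] b by simp
  show ?thesis unfolding gv_gt_iff v_smult_coeff vi
  proof
    fix i have "ereal b < v (coeff p i)" using assms gv_le vg b by (metis order_less_le_trans)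
    then show "0 < ereal (- b) + v (coeff p i)" by (cases "v (coeff p i)") auto
  qed
qed

lemma scale_back_gt: assumes "0 < gauss_val v E" shows "gauss_val v \<rho> < gauss_val v (smult \<gamma> E)"
proof -
  obtain b where b: "v \<gamma> = ereal b" using vg nums by auto
  show ?thesis unfolding vg[symmetric] b gv_gt_iff v_smult_coeff
  proof
    fix i have "0 < v (coeff E i)" using assms gv_gt_iff by blast
    then show "ereal b < ereal b + v (coeff E i)" by (cases "v (coeff E i)") auto
  qed
qed

lemma P0: "gauss_val v (smult (inverse \<gamma>) \<rho>) = 0"
proof -
  obtain b where b: "v \<gamma> = ereal b" using vg nums by auto
  have vi: "v (inverse \<gamma>) = ereal (- b)" using v_inv[OF g0] b by simp
  obtain i where i: "gauss_val v \<rho> = v (coeff \<rho> i)" using gv_att by blast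
  have "0 \<le> gauss_val v (smult (inverse \<gamma>) \<rho>)" by (rule scale_ge) simp
  moreover have "gauss_val v (smult (inverse \<gamma>) \<rho>) \<le> v (coeff (smult (inverse \<gamma>) \<rho>) i)" by (rule gv_le)
  moreover have "v (coeff (smult (inverse \<gamma>) \<rho>) i) = 0"
  proof -
    have "v (coeff \<rho> i) = ereal b" using i vg b by simp
    then show ?thesis unfolding v_smult_coeff vi by simp
  qed
  ultimately show ?thesis by simp
qed

lemma h_eq: "h = smult \<gamma> (smult (inverse \<beta>) q * smult (inverse \<beta>) q + smult (inverse \<gamma>) \<rho>)"
proof -
  have "smult (inverse \<beta>) q * smult (inverse \<beta>) q = smult (inverse \<gamma>) (q * q)"
  proof -
    have "inverse \<beta> * inverse \<beta> = inverse \<gamma>" using bb by (metis inverse_mult_distrib)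
    then show ?thesis by (simp add: mult_smult_left mult_smult_right)
  qed
  then show ?thesis using hqr g0 by (simp add: power2_eq_square smult_add_right)
qed

lemma key: "0 < gauss_val v (smult 2 (smult (inverse \<beta>) q))"
proof (rule ccontr)
  define Q where "Q = smult (inverse \<beta>) q"
  define P where "P = smult (inverse \<gamma>) \<rho>"
  assume "\<not> 0 < gauss_val v (smult 2 (smult (inverse \<beta>) q))"
  then obtain j where j: "v (coeff (smult 2 Q) j) \<le> 0" unfolding gv_gt_iff Q_def by (auto simp: not_less)
  obtain a b w where nm: "gauss_val v h = ereal a" "gauss_val v \<rho> = ereal b" "v 2 = ereal w" "b - a < 2 * w" "0 < w"
    using nums by blast
  have "ereal w + v (coeff Q j) \<le> 0" using j nm(3) by (simp add: v_mult)
  then have Qj: "v (coeff Q j) \<le> ereal (- w)" by (cases "v (coeff Q j)") auto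
  then have "coeff Q j \<noteq> 0" by auto
  then have Qnz: "Q \<noteq> 0" by auto
  obtain m where m: "gauss_val v Q = ereal m" using gv_fin[OF Qnz] by blast
  have "ereal m \<le> ereal (- w)" using gv_le[of Q j] Qj m by (metis order_trans)
  then have mw: "m \<le> - w" by simp
  obtain i where i: "v (coeff (Q * Q) i) \<le> ereal (2 * m)" using gauss_sq[OF Qnz m] by blast
  have "0 \<le> gauss_val v P" using P0 P_def by simp
  then have Pi: "0 \<le> v (coeff P i)" using gv_le order_trans by blast
  have lt: "v (coeff (Q * Q) i) < v (coeff P i)"
  proof -
    have "ereal (2*m) < 0" using mw nm(5) by simp
    then show ?thesis using i Pi by (meson le_less_trans less_le_trans)
  qed
  have "coeff h i = \<gamma> * (coeff (Q * Q) i + coeff P i)" using h_eq Q_def P_def by (metis coeff_add coeff_smult)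
  then have "v (coeff h i) = ereal b + v (coeff (Q * Q) i)" 
    using v_strict[OF lt] by (simp add: v_mult vg nm(2))
  also have "\<dots> \<le> ereal b + ereal (2 * m)" using i by (intro add_left_mono)
  finally have "v (coeff h i) \<le> ereal (b + 2 * m)" by simp
  moreover have "ereal a \<le> v (coeff h i)" using gv_le nm(1) by metis
  ultimately have "a \<le> b + 2 * m" by (metis ereal_less_eq(3) order_trans)
  then show False using mw nm(4) by simp
qed


lemma smult_canc: "(c::'a) \<noteq> 0 \<Longrightarrow> smult c A = smult c B \<Longrightarrow> A = B"
  by (simp add: poly_eq_iff)

lemma sq_smult: "smult c X * smult c X = smult (c * c) (X * X)"
  by (simp add: mult_smult_left mult_smult_right)

lemma two_smult: "smult (2::'a) p = p + p"
  by (metis one_add_one smult_add_left smult_1_left)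

lemma core:
  assumes h': "h = q' ^ 2 + \<rho>'" and ge: "gauss_val v \<rho> \<le> gauss_val v \<rho>'"
  shows "map_poly red (smult (inverse \<gamma>) \<rho>) = map_poly red (smult (inverse \<gamma>) \<rho>') + (map_poly red (smult (inverse \<beta>) (q' - q)))\<^sup>2"
proof -
  define Q where "Q = smult (inverse \<beta>) q"
  define P where "P = smult (inverse \<gamma>) \<rho>"
  define P' where "P' = smult (inverse \<gamma>) \<rho>'"
  define D where "D = smult (inverse \<beta>) (q' - q)"
  define T where "T = smult 2 Q * D"
  have hP: "gauss_val v P = 0" using P0 P_def by simp
  have hP': "0 \<le> gauss_val v P'" unfolding P'_def by (rule scale_ge[OF ge])
  have hQ: "0 < gauss_val v (smult 2 Q)" using key Q_def by simp
  have q'e: "q' = smult \<beta> (Q + D)" unfolding Q_def D_def using b0 by (simp add: smult_add_right)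
  have r'e: "\<rho>' = smult \<gamma> P'" unfolding P'_def using g0 by simp
  have q2: "q' ^ 2 = smult \<gamma> ((Q + D) * (Q + D))" unfolding q'e power2_eq_square bb[symmetric] by (rule sq_smult)
  have "smult \<gamma> (Q * Q + P) = h" using h_eq[folded Q_def P_def] by simp
  also have "h = smult \<gamma> ((Q + D) * (Q + D) + P')" unfolding h' q2 r'e smult_add_right ..
  finally have "smult \<gamma> (Q * Q + P) = smult \<gamma> ((Q + D) * (Q + D) + P')" .
  then have "Q * Q + P = (Q + D) * (Q + D) + P'" using g0 smult_canc by blast
  then have Pe: "P = P' + D * D + T" unfolding T_def two_smult by (simp add: algebra_simps)
  have hD: "0 \<le> gauss_val v D"
  proof (rule ccontr)
    assume "\<not> 0 \<le> gauss_val v D"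
    then have lt: "gauss_val v D < 0" by simp
    then have Dnz: "D \<noteq> 0" by auto
    obtain m where m: "gauss_val v D = ereal m" using gv_fin[OF Dnz] by blast
    have m0: "m < 0" using lt m by simp
    obtain i where i: "v (coeff (D * D) i) \<le> ereal (2 * m)" using gauss_sq[OF Dnz m] by blast
    have "ereal (0 + m) < gauss_val v T" unfolding T_def
      by (rule gv_mult_gt) (use hQ m in \<open>auto simp: zero_ereal_def\<close>)
    moreover have "ereal (2 * m) < ereal (0 + m)" using m0 by simp
    ultimately have t: "ereal (2 * m) < gauss_val v T" by (meson less_trans)
    have p: "ereal (2 * m) < gauss_val v P" using hP m0 by simp
    have "ereal (2 * m) < 0" using m0 by simp
    then have p': "ereal (2 * m) < gauss_val v P'" using hP' by (meson less_le_trans)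
    have "D * D = P - P' - T" using Pe by simp
    then have "ereal (2 * m) < gauss_val v (D * D)" using gv_diff_gt[OF gv_diff_gt[OF p p'] t] by simp
    then have "ereal (2 * m) < v (coeff (D * D) i)" using gv_le less_le_trans by blast
    then show False using i by simp
  qed
  have hDD: "0 \<le> gauss_val v (D * D)" using gv_mult_ge[of 0 D 0 D] hD by (simp add: zero_ereal_def)
  have hT: "0 < gauss_val v T" unfolding T_def using gv_mult_gt[of 0 "smult 2 Q" 0 D] hQ hD by (simp add: zero_ereal_def)
  have "map_poly red P = map_poly red (P' + D * D) + map_poly red T"
    unfolding Pe by (rule R_add) (use hP' hDD hT gv_add_ge in auto)
  also have "map_poly red T = 0" using R_zero_iff hT by simp
  also have "map_poly red (P' + D * D) = map_poly red P' + map_poly red D * map_poly red D"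
    using R_add[OF hP' hDD] R_mult[OF hD hD] by simp
  finally show ?thesis unfolding P_def P'_def D_def power2_eq_square by simp
qed

lemma deg_map_le: "f 0 = 0 \<Longrightarrow> degree (map_poly f p) \<le> degree p"
  by (rule degree_le) (simp add: coeff_map_poly coeff_eq_0)

lemma improve:
  assumes sq: "map_poly red (smult (inverse \<gamma>) \<rho>) = s ^ 2"
  shows "\<exists>q' \<rho>'. part_square_decomp h q' \<rho>' \<and> gauss_val v \<rho> < gauss_val v \<rho>'"
proof -
  define L where "L c = (if c = 0 then 0 else (SOME x. 0 \<le> v x \<and> red x = c))" for c
  have L0: "L 0 = 0" unfolding L_def by simp
  have Lv: "0 \<le> v (L c) \<and> red (L c) = c" for c
  proof (cases "c = 0")
    case True then show ?thesis using L0 by simp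
  next
    case False then show ?thesis unfolding L_def using someI_ex[OF red_surj[of c]] by simp
  qed
  define S where "S = map_poly L s"
  have cS: "coeff S i = L (coeff s i)" for i unfolding S_def by (simp add: coeff_map_poly L0)
  have hS: "0 \<le> gauss_val v S" unfolding gv_ge_iff cS using Lv by simp
  have RS: "map_poly red S = s" unfolding poly_eq_iff coeff_R cS using Lv by simp
  have dS: "degree S \<le> degree s" unfolding S_def by (rule deg_map_le[of L, OF L0])
  define Q where "Q = smult (inverse \<beta>) q"
  define P where "P = smult (inverse \<gamma>) \<rho>"
  define E where "E = P - S * S - smult 2 Q * S"
  define q' where "q' = q + smult \<beta> S"
  define \<rho>' where "\<rho>' = h - q' ^ 2"
  have hP: "gauss_val v P = 0" using P0 P_def by simp
  have hQ: "0 < gauss_val v (smult 2 Q)" using key Q_def by simp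
  have q'e: "q' = smult \<beta> (Q + S)" unfolding Q_def q'_def using b0 by (simp add: smult_add_right)
  have q2: "q' ^ 2 = smult \<gamma> ((Q + S) * (Q + S))" unfolding q'e power2_eq_square bb[symmetric] by (rule sq_smult)
  have "\<rho>' = smult \<gamma> (Q * Q + P) - smult \<gamma> ((Q + S) * (Q + S))"
    unfolding \<rho>'_def q2 using h_eq[folded Q_def P_def] by simp
  also have "\<dots> = smult \<gamma> (Q * Q + P - (Q + S) * (Q + S))" by (simp only: smult_diff_right)
  also have "Q * Q + P - (Q + S) * (Q + S) = E" unfolding E_def two_smult by (simp add: algebra_simps)
  finally have r'e: "\<rho>' = smult \<gamma> E" .
  have hSS: "0 \<le> gauss_val v (S * S)" using gv_mult_ge[of 0 S 0 S] hS by (simp add: zero_ereal_def)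
  have "map_poly red (P - S * S) = 0"
    using R_diff[of P "S * S"] hP hSS R_mult[OF hS hS] RS sq P_def by (simp add: power2_eq_square)
  then have g1: "0 < gauss_val v (P - S * S)" using R_zero_iff gv_diff_ge hP hSS by (metis order_refl)
  have g2: "0 < gauss_val v (smult 2 Q * S)" using gv_mult_gt[of 0 "smult 2 Q" 0 S] hQ hS by (simp add: zero_ereal_def)
  have "0 < gauss_val v E" unfolding E_def by (rule gv_diff_gt[OF g1 g2])
  then have better: "gauss_val v \<rho> < gauss_val v \<rho>'" unfolding r'e by (rule scale_back_gt)
  have dq: "2 * degree q \<le> degree h + 1" using psd unfolding part_square_decomp_def by linarith
  have "degree \<rho> = degree (h - q ^ 2)" using hqr by simp
  also have "\<dots> \<le> max (degree h) (degree (q ^ 2))" by (rule degree_diff_le_max)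
  also have "\<dots> \<le> degree h + 1" using degree_power_le[of q 2] dq by simp
  finally have dr: "degree \<rho> \<le> degree h + 1" .
  have "degree (s ^ 2) \<le> degree P" unfolding sq[symmetric] P_def by (rule deg_map_le) simp
  also have "degree P = degree \<rho>" unfolding P_def using g0 by simp
  finally have "degree (s ^ 2) \<le> degree h + 1" using dr by simp
  moreover have "degree (s ^ 2) = 2 * degree s"
    by (cases "s = 0") (simp_all add: degree_power_eq)
  ultimately have "degree s \<le> (degree h + 1) div 2" by linarith
  then have "degree q' \<le> (degree h + 1) div 2"
  proof -
    have "degree q \<le> (degree h + 1) div 2" using psd unfolding part_square_decomp_def by blast
    moreover have "degree (q + smult \<beta> S) \<le> max (degree q) (degree S)"
      using degree_add_le_max[of q "smult \<beta> S"] b0 by simp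
    ultimately show ?thesis unfolding q'_def using dS \<open>degree s \<le> (degree h + 1) div 2\<close> by linarith
  qed
  then have "part_square_decomp h q' \<rho>'" unfolding part_square_decomp_def \<rho>'_def by simp
  then show ?thesis using better by blast
qed

end

lemma sqrt_ex: assumes "alg_closed_type TYPE('b::field)" shows "\<exists>\<beta>::'b. \<beta> * \<beta> = \<gamma>"
proof -
  have "degree [:- \<gamma>, 0, 1::'b:] \<ge> 1" by simp
  then obtain x where "poly [:- \<gamma>, 0, 1::'b:] x = 0" using assms unfolding alg_closed_type_def by blast
  then have "x * x = \<gamma>" by (simp add: algebra_simps)
  then show ?thesis by blast
qed

lemma char2_double: "(2::'k::field) = 0 \<Longrightarrow> (Z::'k poly) + Z = 0"
proof -
  assume t: "(2::'k) = 0"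
  have "Z + Z = smult (1 + 1) Z" by (simp only: smult_add_left smult_1_left)
  also have "(1::'k) + 1 = 0" using t by simp
  finally show ?thesis by simp
qed

lemma frob: "(2::'k::field) = 0 \<Longrightarrow> pCons (a::'k) Y * pCons a Y = pCons (a * a) (pCons 0 (Y * Y))"
proof -
  assume t: "(2::'k) = 0"
  have "pCons a Y * pCons a Y = pCons (a * a) (smult a Y + smult a Y + pCons 0 (Y * Y))"
    by (simp add: mult_pCons_left mult_pCons_right algebra_simps)
  also have "smult a Y + smult a Y = 0" using char2_double[of "smult a Y"] t by blast
  finally show ?thesis by simp
qed

lemma sq_odd: assumes t: "(2::'k::field) = 0" shows "odd i \<Longrightarrow> coeff ((X::'k poly) ^ 2) i = 0"
proof (induction X arbitrary: i rule: pCons_induct)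
  case 0 then show ?case by simp
next
  case (pCons a Y)
  have e: "(pCons a Y) ^ 2 = pCons (a * a) (pCons 0 (Y * Y))" unfolding power2_eq_square by (rule frob[OF t])
  obtain i' where i': "i = Suc i'" using pCons.prems by (cases i) auto
  show ?case
  proof (cases i')
    case 0 then show ?thesis unfolding e i' by simp
  next
    case (Suc j)
    then have "odd j" using pCons.prems i' by simp
    then show ?thesis unfolding e i' Suc using pCons.IH[of j] by (simp add: power2_eq_square)
  qed
qed

lemma sq_deriv: assumes t: "(2::'k::field) = 0" shows "pderiv ((X::'k poly) ^ 2) = 0"
proof -
  have "pderiv (X ^ 2) = X * pderiv X + X * pderiv X" by (simp add: power2_eq_square pderiv_mult)
  also have "\<dots> = 0" using char2_double[of "X * pderiv X"] t by blast
  finally show ?thesis .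
qed

context dec begin

lemma tv_less: "tval v h x < tval v h y \<longleftrightarrow> gauss_val v x < gauss_val v y"
proof -
  obtain a where a: "gauss_val v h = ereal a" using nums by blast
  show ?thesis unfolding tval_def a
    by (cases "gauss_val v x"; cases "gauss_val v y") auto
qed

lemma L1: assumes ac: "alg_closed_type TYPE('a)" and nr: "normalized_reduction v red \<rho> r"
  and sq: "is_square_poly r" shows "\<not> good_decomp v h q \<rho>"
proof -
  obtain \<gamma> where g: "\<gamma> \<noteq> 0" "v \<gamma> = gauss_val v \<rho>" "r = map_poly red (smult (inverse \<gamma>) \<rho>)"
    using nr unfolding normalized_reduction_def by blast
  obtain \<beta> where b: "\<beta> * \<beta> = \<gamma>" using sqrt_ex[OF ac] by blast
  interpret dec2 v red h q \<rho> \<gamma> \<beta> by unfold_locales (use g b in auto)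
  obtain s where "r = s ^ 2" using sq unfolding is_square_poly_def by blast
  then obtain q' \<rho>' where "part_square_decomp h q' \<rho>'" "gauss_val v \<rho> < gauss_val v \<rho>'"
    using improve g by metis
  then show ?thesis unfolding good_decomp_def using tv tv_less by (auto simp: not_le)
qed

lemma L2: assumes ac: "alg_closed_type TYPE('a)" and ng: "\<not> good_decomp v h q \<rho>"
  and nr: "normalized_reduction v red \<rho> r" shows "is_square_poly r"
proof -
  obtain \<gamma> where g: "\<gamma> \<noteq> 0" "v \<gamma> = gauss_val v \<rho>" "r = map_poly red (smult (inverse \<gamma>) \<rho>)"
    using nr unfolding normalized_reduction_def by blast
  obtain \<beta> where b: "\<beta> * \<beta> = \<gamma>" using sqrt_ex[OF ac] by blast
  interpret dec2 v red h q \<rho> \<gamma> \<beta> by unfold_locales (use g b in auto)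
  obtain q' \<rho>' where d: "part_square_decomp h q' \<rho>'" "tval v h \<rho> < tval v h \<rho>'"
    using ng psd tv unfolding good_decomp_def by (auto simp: not_le)
  have lt: "gauss_val v \<rho> < gauss_val v \<rho>'" using d(2) tv_less by blast
  have h': "h = q' ^ 2 + \<rho>'" using d(1) unfolding part_square_decomp_def by blast
  have c: "r = map_poly red (smult (inverse \<gamma>) \<rho>') + (map_poly red (smult (inverse \<beta>) (q' - q)))\<^sup>2"
    using core[OF h'] lt g(3) by simp
  have "0 < gauss_val v (smult (inverse \<gamma>) \<rho>')" by (rule scale_gt[OF lt])
  then have "map_poly red (smult (inverse \<gamma>) \<rho>') = 0" using R_zero_iff by simp
  then show ?thesis using c unfolding is_square_poly_def by auto
qed

lemma L3: "\<exists>r. normalized_reduction v red \<rho> r"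
proof -
  obtain i where i: "gauss_val v \<rho> = v (coeff \<rho> i)" using gv_att by blast
  have "coeff \<rho> i \<noteq> 0" using i nums by auto
  then show ?thesis unfolding normalized_reduction_def using i rnz by metis
qed

lemma L4: assumes ac: "alg_closed_type TYPE('a)" and g1: "good_decomp v h q \<rho>"
  and g2: "good_decomp v h q' \<rho>'" and nr: "normalized_reduction v red \<rho> r"
  and nr': "normalized_reduction v red \<rho>' r'"
  shows "odd_degrees r = odd_degrees r' \<and> (\<exists>c. c \<noteq> 0 \<and> pderiv r = smult c (pderiv r'))"
proof -
  have psd': "part_square_decomp h q' \<rho>'" using g2 unfolding good_decomp_def by blast
  have n1: "\<not> tval v h \<rho> < tval v h \<rho>'" using g1 tv psd' unfolding good_decomp_def by (auto simp: not_le)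
  then have "\<not> tval v h \<rho>' \<ge> 2 * v 2" using tv by (meson not_le order_less_le_trans)
  then have "\<not> tval v h \<rho>' < tval v h \<rho>" using g2 psd unfolding good_decomp_def by blast
  then have eq: "gauss_val v \<rho>' = gauss_val v \<rho>" using n1 tv_less by (meson not_less_iff_gr_or_eq)
  obtain \<gamma> where g: "\<gamma> \<noteq> 0" "v \<gamma> = gauss_val v \<rho>" "r = map_poly red (smult (inverse \<gamma>) \<rho>)"
    using nr unfolding normalized_reduction_def by blast
  obtain \<gamma>2 where g2: "\<gamma>2 \<noteq> 0" "v \<gamma>2 = gauss_val v \<rho>'" "r' = map_poly red (smult (inverse \<gamma>2) \<rho>')"
    using nr' unfolding normalized_reduction_def by blast
  obtain \<beta> where b: "\<beta> * \<beta> = \<gamma>" using sqrt_ex[OF ac] by blast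
  interpret dec2 v red h q \<rho> \<gamma> \<beta> by unfold_locales (use g b in auto)
  have h': "h = q' ^ 2 + \<rho>'" using psd' unfolding part_square_decomp_def by blast
  define P' where "P' = smult (inverse \<gamma>) \<rho>'"
  define X where "X = map_poly red (smult (inverse \<beta>) (q' - q))"
  have c: "r = map_poly red P' + X\<^sup>2" unfolding P'_def X_def using core[OF h'] eq g(3) by simp
  have hP': "0 \<le> gauss_val v P'" unfolding P'_def by (rule scale_ge) (use eq in simp)
  define u where "u = \<gamma> * inverse \<gamma>2"
  obtain e where e: "v \<gamma> = ereal e" using g(2) nums by auto
  have "v \<gamma>2 = ereal e" using g2(2) eq g(2) e by simp
  then have "v (inverse \<gamma>2) = ereal (- e)" using v_inv[OF g2(1)] by simp
  then have vu: "v u = 0" unfolding u_def using v_mult e by simp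
  have e2: "\<gamma> * inverse \<gamma>2 * inverse \<gamma> = inverse \<gamma>2" using g(1) by (simp add: field_simps)
  have "smult (inverse \<gamma>2) \<rho>' = smult u P'" unfolding u_def P'_def by (simp only: smult_smult e2)
  then have r'e: "r' = smult (red u) (map_poly red P')" using g2(3) R_smult[of u P'] vu hP' by simp
  have u0: "red u \<noteq> 0" using red_zero_iff[of u] vu by simp
  have oc: "coeff r i = coeff (map_poly red P') i" if "odd i" for i
    unfolding c using sq_odd[OF two that] by simp
  have "odd_degrees r = odd_degrees r'"
    unfolding odd_degrees_def r'e using oc u0 by auto
  moreover have "pderiv r = smult (inverse (red u)) (pderiv r')"
    unfolding c r'e using u0 sq_deriv[OF two] by (simp add: pderiv_add pderiv_smult)
  moreover have "inverse (red u) \<noteq> 0" using u0 by simp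
  ultimately show ?thesis by blast
qed

end

theorem proposition3p13:
  fixes K :: "'a::field_char_0 set" and v :: "'a \<Rightarrow> ereal" and red :: "'a \<Rightarrow> 'k::field"
    and h q \<rho> :: "'a poly"
  assumes "setting K v red"
    and "h \<noteq> 0"
    and "part_square_decomp h q \<rho>"
    and "tval v h \<rho> < 2 * v 2"
  shows "(good_decomp v h q \<rho> \<longleftrightarrow>
            (\<exists>r. normalized_reduction v red \<rho> r \<and> \<not> is_square_poly r))
       \<and> (good_decomp v h q \<rho> \<longleftrightarrow>
            (\<forall>r. normalized_reduction v red \<rho> r \<longrightarrow> \<not> is_square_poly r))
       \<and> (\<forall>q' \<rho>' r r'. good_decomp v h q \<rho> \<longrightarrow> good_decomp v h q' \<rho>' \<longrightarrow>
            normalized_reduction v red \<rho> r \<longrightarrow> normalized_reduction v red \<rho>' r' \<longrightarrow>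
            odd_degrees r = odd_degrees r' \<and>
            (\<exists>c. c \<noteq> 0 \<and> pderiv r = smult c (pderiv r')))"
proof -
  have s: "alg_closed_type TYPE('a)" "(2::'k) = 0" "is_valuation v" "is_reduction v red"
    using assms(1) unfolding setting_def by auto
  interpret dec v red h q \<rho> by unfold_locales (use s assms in auto)
  have A: "good_decomp v h q \<rho> \<Longrightarrow> (\<forall>r. normalized_reduction v red \<rho> r \<longrightarrow> \<not> is_square_poly r)"
    using L1[OF s(1)] by blast
  have B: "(\<exists>r. normalized_reduction v red \<rho> r \<and> \<not> is_square_poly r) \<Longrightarrow> good_decomp v h q \<rho>"
    using L2[OF s(1)] by blast
  have C: "(\<forall>r. normalized_reduction v red \<rho> r \<longrightarrow> \<not> is_square_poly r) \<Longrightarrow> (\<exists>r. normalized_reduction v red \<rho> r \<and> \<not> is_square_poly r)"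
    using L3 by blast
  show ?thesis using A B C L4[OF s(1)] by blast
qed

end
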